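(* Let $m=2k$ with $k\in\mathbb{N}$. For every $\beta\in(k+1,m+1]$ there exists $x\in(0,\frac{m}{\beta-1})$ with a unique $\beta$-expansion, i.e. $|\Sigma_{\beta,m}(x)|=1$.
   Context: $\Sigma_{\beta,m}(x)=\{(\epsilon_i)_{i=1}^\infty\in\{0,\ldots,m\}^{\mathbb{N}}:\sum_{i\ge1}\epsilon_i\beta^{-i}=x\}$; its elements are the $\beta$-expansions of $x$. *)

theory Defs
  imports "HOL-Analysis.Analysis"
begin

text \<open>beta-expansions of x with digit alphabet {0..m}. A sequence
  (eps_1, eps_2, ...) is represented 0-indexed as e :: nat => nat with
  e n = eps_(n+1), so the value is sum_n e n * beta^-(n+1).\<close>
definition beta_expansions :: "real \<Rightarrow> nat \<Rightarrow> real \<Rightarrow> (nat \<Rightarrow> nat) set" where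
  "beta_expansions \<beta> m x =
     {e. (\<forall>i. e i \<le> m) \<and> (\<lambda>i. real (e i) / \<beta> ^ (Suc i)) sums x}"

end

theory Submission
  imports Defs
begin

lemma geo_c:
  fixes \<beta> c :: real
  assumes "1 < \<beta>"
  shows "(\<lambda>i. c / \<beta> ^ Suc i) sums (c / (\<beta> - 1))"
proof -
  have "(\<lambda>i. (1/\<beta>) ^ i) sums (1 / (1 - 1/\<beta>))"
    by (rule geometric_sums) (use assms in auto)
  hence 1: "(\<lambda>i. (c/\<beta>) * (1/\<beta>) ^ i) sums ((c/\<beta>) * (1 / (1 - 1/\<beta>)))"
    by (rule sums_mult)
  have 2: "(c/\<beta>) * (1 / (1 - 1/\<beta>)) = c / (\<beta> - 1)"
    using assms by (simp add: field_simps)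
  have 3: "(\<lambda>i. (c/\<beta>) * (1/\<beta>) ^ i) = (\<lambda>i. c / \<beta> ^ Suc i)"
    by (rule ext) (simp add: power_divide)
  show ?thesis using 1 unfolding 2 3 .
qed

theorem proposition3p2:
  fixes k m :: nat and \<beta> :: real
  assumes "m = 2 * k"
    and "real k + 1 < \<beta>" and "\<beta> \<le> real m + 1"
  shows "\<exists>x. 0 < x \<and> x < real m / (\<beta> - 1) \<and> card (beta_expansions \<beta> m x) = 1"
proof -
  have b1: "1 < \<beta>" using assms by linarith
  have k1: "k \<ge> 1" using assms by (cases k) auto
  have kb: "real k / (\<beta> - 1) < 1" using assms b1 by (simp add: field_simps)
  define x where "x = real k / (\<beta> - 1)"
  have "beta_expansions \<beta> m x = {\<lambda>_. k}"
  proof (intro equalityI subsetI)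
    fix e assume "e \<in> beta_expansions \<beta> m x"
    hence em: "\<And>i. e i \<le> m" and es: "(\<lambda>i. real (e i) / \<beta> ^ Suc i) sums x"
      unfolding beta_expansions_def by auto
    define d where "d i = real (e i) - real k" for i
    have dsum: "(\<lambda>i. d i / \<beta> ^ Suc i) sums 0"
    proof -
      have "(\<lambda>i. real (e i) / \<beta> ^ Suc i - real k / \<beta> ^ Suc i) sums (x - x)"
        using sums_diff[OF es geo_c[OF b1, of "real k"]] unfolding x_def .
      thus ?thesis by (simp add: d_def diff_divide_distrib)
    qed
    have dbound: "\<bar>d i\<bar> \<le> real k" for i
      using em[of i] assms(1) by (auto simp: d_def)
    have "\<forall>j<n. e j = k" for n
    proof (induction n)
      case 0 then show ?case by simp
    next
      case (Suc n)
      have h: "(\<lambda>i. d (i + n) / \<beta> ^ Suc (i + n)) sums (0 - (\<Sum>i<n. d i / \<beta> ^ Suc i))"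
        by (rule sums_split_initial_segment[OF dsum])
      have "(\<Sum>i<n. d i / \<beta> ^ Suc i) = 0"
        using Suc.IH by (simp add: d_def)
      with h have h2: "(\<lambda>i. d (i + n) / \<beta> ^ Suc (i + n)) sums 0" by simp
      have h3: "(\<lambda>i. d (i + n) / \<beta> ^ Suc (i + n) * \<beta> ^ Suc n) sums (0 * \<beta> ^ Suc n)"
        by (rule sums_mult2[OF h2])
      have eq: "d (i + n) / \<beta> ^ Suc (i + n) * \<beta> ^ Suc n = d (i + n) / \<beta> ^ i" for i
        using b1 by (simp add: field_simps power_add)
      have h4: "(\<lambda>i. d (i + n) / \<beta> ^ i) sums 0" using h3 unfolding eq by simp
      have h5: "(\<lambda>i. d (Suc i + n) / \<beta> ^ Suc i) sums (- d n)"
        using sums_Suc_iff[of "\<lambda>i. d (i + n) / \<beta> ^ i" "0 - d n"] h4 by simp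
      have tb: "- real k / \<beta> ^ Suc j \<le> d (Suc j + n) / \<beta> ^ Suc j \<and>
                d (Suc j + n) / \<beta> ^ Suc j \<le> real k / \<beta> ^ Suc j" for j
      proof -
        have p: "0 < \<beta> ^ Suc j" using b1 by simp
        from dbound[of "Suc j + n"] have "- real k \<le> d (Suc j + n)" "d (Suc j + n) \<le> real k"
          by (auto simp: abs_le_iff)
        thus ?thesis using divide_right_mono p by (metis less_le)
      qed
      have lo: "- real k / (\<beta> - 1) \<le> - d n"
        by (rule sums_le[OF _ geo_c[OF b1, of "- real k"] h5]) (use tb in auto)
      have hi: "- d n \<le> real k / (\<beta> - 1)"
        by (rule sums_le[OF _ h5 geo_c[OF b1, of "real k"]]) (use tb in auto)
      have "\<bar>d n\<bar> < 1" using lo hi kb by (auto simp: abs_less_iff)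
      hence "e n = k" unfolding d_def by linarith
      with Suc.IH show ?case using less_Suc_eq by auto
    qed
    hence "\<And>j. e j = k" by blast
    thus "e \<in> {\<lambda>_. k}" by auto
  next
    fix e assume "e \<in> {\<lambda>_::nat. k}"
    thus "e \<in> beta_expansions \<beta> m x"
      using geo_c[OF b1, of "real k"] assms(1) by (auto simp: beta_expansions_def x_def)
  qed
  moreover have "0 < x" using k1 b1 by (simp add: x_def)
  moreover have "x < real m / (\<beta> - 1)" using k1 b1 assms(1)
    by (simp add: x_def divide_strict_right_mono)
  ultimately show ?thesis by auto
qed

end
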